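(* Let $p$ be a prime with $p\equiv\pm3\pmod 8$, $q=p^s$, let $m$ be an integer with $2^m\mid(q-1)$ and $m\ge 3$ if $p\equiv 3\pmod 8$, $m\ge 2$ if $p\equiv -3\pmod 8$, and let $\lambda$ be a multiplicative character of order $2^m$ on $\mathbb F_q$. For $1\le r\le m$, $0\le t\le m$ and odd integer $c_0$ put $$W_{r,t}(c_0)=\sum_{\substack{j_0=1\\ 2\nmid j_0}}^{2^r-1}G(\lambda^{2^{m-r}j_0})\,\zeta_{2^{m-t}}^{2^{m-r}c_0j_0}.$$ Then $$W_{1,t}(c_0)=\begin{cases}-G(\eta)&\text{if } t=0,\\ G(\eta)&\text{if } t\ge 1,\end{cases}\qquad W_{2,t}(c_0)=\begin{cases}G(\lambda^{2^{m-2}})+G(\bar\lambda^{2^{m-2}})&\text{if } t\ge 2,\\ -\bigl(G(\lambda^{2^{m-2}})+G(\bar\lambda^{2^{m-2}})\bigr)&\text{if } t=1,\\ i^{c_0}\bigl(G(\lambda^{2^{m-2}})-G(\bar\lambda^{2^{m-2}})\bigr)&\text{if } t=0,\end{cases}$$ and, for $3\le r\le m$, $$W_{r,t}(c_0)=\begin{cases} 2^{r-2}\bigl(G(\lambda^{2^{m-r}})+G(\bar\lambda^{2^{m-r}})\bigr)&\text{if } r\le t,\\ -2^{r-2}\bigl(G(\lambda^{2^{m-r}})+G(\bar\lambda^{2^{m-r}})\bigr)&\text{if } r=t+1,\\ 2^{r-2} i^{c_0}\bigl(G(\lambda^{2^{m-r}})-G(\bar\lambda^{2^{m-r}})\bigr)&\text{if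 } r=t+2 \text{ and } p\equiv -3\pmod{8},\\ 2^{r-3} i\sqrt{2}\,\bigl(G(\lambda^{2^{m-r}})-G(\bar\lambda^{2^{m-r}})\bigr)&\text{if } r=t+3,\ p\equiv 3\pmod{8},\ c_0\equiv 1\text{ or }3\pmod{8},\\ -2^{r-3} i\sqrt{2}\,\bigl(G(\lambda^{2^{m-r}})-G(\bar\lambda^{2^{m-r}})\bigr)&\text{if } r=t+3,\ p\equiv 3\pmod{8},\ c_0\equiv 5\text{ or }7\pmod{8},\\ 0&\text{otherwise.} \end{cases}$$
   Context: Multiplicative characters are extended by $\psi(0)=0$; $\bar\lambda$ is the complex conjugate (inverse) character; $\eta$ is the quadratic character of $\mathbb F_q$; $\zeta_k=e^{2\pi i/k}$, $i=\sqrt{-1}$. The Gauss sum of a nontrivial character $\psi$ on $\mathbb F_q$ is $G(\psi)=\sum_{x\in\mathbb F_q}\psi(x)\zeta_p^{\mathrm{Tr}(x)}$, with $\mathrm{Tr}$ the trace from $\mathbb F_q$ to $\mathbb F_p$. *)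

theory Defs
  imports Complex_Main "HOL-Computational_Algebra.Primes"
begin

definition mult_char :: "('a::{finite,field} \<Rightarrow> complex) \<Rightarrow> bool" where
  "mult_char \<psi> \<longleftrightarrow> \<psi> 0 = 0 \<and> (\<forall>x. x \<noteq> 0 \<longrightarrow> \<psi> x \<noteq> 0) \<and>
     (\<forall>x y. x \<noteq> 0 \<longrightarrow> y \<noteq> 0 \<longrightarrow> \<psi> (x * y) = \<psi> x * \<psi> y)"

definition char_order :: "('a::{finite,field} \<Rightarrow> complex) \<Rightarrow> nat" where
  "char_order \<psi> = (LEAST n. n > 0 \<and> (\<forall>x. x \<noteq> 0 \<longrightarrow> \<psi> x ^ n = 1))"

text \<open>k-th power of a character (k > 0); conjugate character.\<close>
definition char_pow :: "('a \<Rightarrow> complex) \<Rightarrow> nat \<Rightarrow> 'a \<Rightarrow> complex" where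
  "char_pow \<psi> k = (\<lambda>x. \<psi> x ^ k)"

definition char_conj :: "('a \<Rightarrow> complex) \<Rightarrow> 'a \<Rightarrow> complex" where
  "char_conj \<psi> = (\<lambda>x. cnj (\<psi> x))"

definition zeta_pow :: "nat \<Rightarrow> int \<Rightarrow> complex" where
  "zeta_pow n a = exp (2 * pi * \<i> * of_int a / of_nat n)"

text \<open>Absolute trace F_q -> F_p (q = p^s), valued in the prime subfield of 'a.\<close>
definition trace :: "nat \<Rightarrow> nat \<Rightarrow> 'a::{finite,field} \<Rightarrow> 'a" where
  "trace p s x = (\<Sum>i<s. x ^ (p ^ i))"

text \<open>The trace as an element of {0..p-1} = F_p.\<close>
definition trace_index :: "nat \<Rightarrow> nat \<Rightarrow> 'a::{finite,field} \<Rightarrow> nat" where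
  "trace_index p s x = (THE k. k < p \<and> of_nat k = trace p s x)"

definition gauss_sum :: "nat \<Rightarrow> nat \<Rightarrow> ('a::{finite,field} \<Rightarrow> complex) \<Rightarrow> complex" where
  "gauss_sum p s \<psi> = (\<Sum>x\<in>UNIV. \<psi> x * zeta_pow p (int (trace_index p s x)))"

definition quad_char :: "'a::{finite,field} \<Rightarrow> complex" where
  "quad_char x = (if x = 0 then 0 else if (\<exists>y. y * y = x) then 1 else -1)"

definition W :: "nat \<Rightarrow> nat \<Rightarrow> ('a::{finite,field} \<Rightarrow> complex) \<Rightarrow> nat \<Rightarrow> nat \<Rightarrow> nat \<Rightarrow> int \<Rightarrow> complex" where
  "W p s \<chi> m r t c0 =
     (\<Sum>j0\<in>{j. 1 \<le> j \<and> j \<le> 2^r - 1 \<and> odd j}.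
        gauss_sum p s (char_pow \<chi> (2^(m-r) * j0)) *
        zeta_pow (2^(m-t)) (2^(m-r) * c0 * int j0))"

end

theory Submission imports Defs begin


lemma pow2_step:
  fixes g u :: int
  assumes "g = 1 + 2^e * u" "odd u" "e \<ge> 2"
  shows "\<exists>v. odd v \<and> g ^ (2 ^ i) = 1 + 2 ^ (e + i) * v"
proof (induction i)
  case 0 thus ?case using assms by auto
next
  case (Suc i)
  then obtain v where v: "odd v" "g ^ (2 ^ i) = 1 + 2 ^ (e + i) * v" by blast
  define d where "d = e + i - 1"
  have d: "e + i = Suc d" "d \<ge> 1" using assms(3) unfolding d_def by auto
  have "g ^ (2 ^ Suc i) = (g ^ (2 ^ i)) ^ 2" by (simp add: power_mult[symmetric] mult.commute)
  also have "\<dots> = 1 + 2 ^ (e + Suc i) * (v + 2 ^ d * v ^ 2)"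
    unfolding v(2) using d by (simp add: power2_eq_square algebra_simps power_add)
  finally have "g ^ (2 ^ Suc i) = 1 + 2 ^ (e + Suc i) * (v + 2 ^ d * v ^ 2)" .
  moreover have "odd (v + 2 ^ d * v ^ 2)" using v(1) d(2) by (simp add: power_0_left)
  ultimately show ?case by blast
qed

lemma gen_res:
  fixes g u j :: int
  assumes "g = 1 + 2^e * u" "odd u" "e \<ge> 2" "r \<ge> e" "j mod 2^e = 1"
  shows "\<exists>k. (2::int)^r dvd g ^ k - j"
  using assms(4)
proof (induction r rule: dec_induct)
  case base
  have "(1::int) mod 2^e = 1" using assms(3) by simp
  hence "(1::int) mod 2^e = j mod 2^e" using assms(5) by simp
  hence "(2::int)^e dvd 1 - j" by (simp only: mod_eq_dvd_iff)
  thus ?case by (metis power_0)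
next
  case (step r)
  then obtain k w where kw: "g ^ k - j = 2^r * w" by (metis dvd_def)
  show ?case
  proof (cases "even w")
    case True
    then obtain w' where "w = 2 * w'" by blast
    hence "g ^ k - j = 2^(Suc r) * w'" using kw by simp
    thus ?thesis by (metis dvd_triv_left)
  next
    case False
    obtain v where v: "odd v" "g ^ (2 ^ (r - e)) = 1 + 2 ^ r * v"
      using pow2_step[OF assms(1-3), of "r - e"] step(1) by auto
    have jodd: "odd j"
    proof -
      have "j = 2^e * (j div 2^e) + 1" using assms(5) div_mult_mod_eq[of j "2^e"] by (simp add: mult.commute)
      moreover have "even ((2::int)^e * (j div 2^e))" using assms(3) by simp
      ultimately show ?thesis by (metis even_plus_one_iff)
    qed
    have "w + j * v = 2 * ((w + j * v) div 2)" using False jodd v(1) by simp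
    then obtain a where a: "w + j * v = 2 * a" by blast
    define r' where "r' = r - 1"
    have r': "r = Suc r'" using step(1) assms(3) unfolding r'_def by auto
    have "g ^ (k + 2 ^ (r - e)) - j = (j + 2^r * w) * (1 + 2 ^ r * v) - j"
      using kw v(2) by (simp add: power_add algebra_simps)
    also have "\<dots> = 2^r * (w + j * v) + 2^r * 2^r * w * v" by (simp add: algebra_simps)
    also have "\<dots> = 2^(Suc r) * (a + 2^r' * w * v)"
      unfolding a r' by (simp add: algebra_simps)
    finally show ?thesis by (metis dvd_triv_left)
  qed
qed



definition E :: "real \<Rightarrow> complex" where "E x = cis (2 * pi * x)"

lemma E_add: "E (x + y) = E x * E y"
  unfolding E_def by (simp add: cis_mult distrib_left)

lemma E_int: "E (of_int k) = 1"
  unfolding E_def by (rule cis_multiple_2pi) simp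

lemma E_nat_mult: "E (of_nat n * x) = E x ^ n"
  unfolding E_def by (simp add: DeMoivre mult.commute mult.left_commute)

lemma E_half_odd: assumes "odd c" shows "E (of_int c / 2) = -1"
proof -
  obtain b where "c = 2 * b + 1" using assms by (metis oddE)
  hence "of_int c / 2 = of_int b + (1/2::real)" by simp
  hence "E (of_int c / 2) = E (of_int b) * E (1/2)" by (metis E_add)
  also have "\<dots> = -1" by (simp add: E_int E_def)
  finally show ?thesis .
qed

lemma zeta_E: "zeta_pow n a = E (of_int a / of_nat n)"
  unfolding zeta_pow_def E_def cis_conv_exp
  by (simp add: algebra_simps)

lemma pow_split: "a \<le> b \<Longrightarrow> (2::real) ^ b = 2 ^ a * 2 ^ (b - a)"
  by (simp add: power_add[symmetric])

lemma zeta_conv: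
  assumes "r \<le> m" "t \<le> m"
  shows "zeta_pow (2^(m-t)) (2^(m-r) * c * int j) = E (of_int (c * int j) / 2^(r-t))"
proof (cases "r \<le> t")
  case True
  have "of_int (2^(m-r) * c * int j) / real (2^(m-t)) = of_int (2^(t-r) * c * int j)"
    using pow_split[of "m-t" "m-r"] True assms by (simp add: field_simps)
  hence "zeta_pow (2^(m-t)) (2^(m-r) * c * int j) = 1" by (simp only: zeta_E E_int)
  moreover have "r - t = 0" using True by simp
  ultimately show ?thesis by (metis E_int div_by_1 power_0)
next
  case False
  have "of_int (2^(m-r) * c * int j) / real (2^(m-t)) = of_int (c * int j) / 2^(r-t)"
    using pow_split[of "m-r" "m-t"] False assms by (simp add: field_simps)
  thus ?thesis by (simp add: zeta_E)
qed

lemma set_param: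
  fixes M K a :: nat
  assumes "a < M"
  shows "{j. j < M * K \<and> j mod M = a} = (\<lambda>k. a + M * k) ` {..<K}"
proof (intro set_eqI iffI)
  fix x assume x: "x \<in> {j. j < M * K \<and> j mod M = a}"
  hence "x = a + M * (x div M)" using mod_mult_div_eq[of x M] by simp
  moreover have "x div M < K"
  proof -
    have "M > 0" using assms by simp
    moreover have "x < K * M" using x by (simp add: mult.commute)
    ultimately show ?thesis by (simp add: div_less_iff_less_mult)
  qed
  ultimately show "x \<in> (\<lambda>k. a + M * k) ` {..<K}" by blast
next
  fix x assume "x \<in> (\<lambda>k. a + M * k) ` {..<K}"
  then obtain k where k: "k < K" "x = a + M * k" by auto
  have "a + M * k < M + M * k" using assms by simp
  also have "\<dots> = M * (k + 1)" by simp
  also have "\<dots> \<le> M * K" using k by (intro mult_le_mono2) simp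
  finally show "x \<in> {j. j < M * K \<and> j mod M = a}" using k assms by simp
qed

lemma sumres:
  fixes c :: int
  assumes "n \<le> r" "e \<le> r" "a < 2^e" "odd c"
  shows "(\<Sum>j\<in>{j. j < 2^r \<and> j mod 2^e = a}. E (of_int (c * int j) / 2^n)) =
    (if n \<le> e then 2^(r-e) * E (of_int (c * int a) / 2^n) else 0)"
proof -
  let ?K = "2^(r-e) :: nat" and ?M = "2^e :: nat"
  have rr: "(2::nat)^r = ?M * ?K" using assms(2) by (simp add: power_add[symmetric])
  define w where "w = E (of_int c * 2^e / 2^n)"
  have "(\<Sum>j\<in>{j. j < 2^r \<and> j mod 2^e = a}. E (of_int (c * int j) / 2^n)) =
     (\<Sum>j\<in>(\<lambda>k. a + ?M * k) ` {..<?K}. E (of_int (c * int j) / 2^n))"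
    unfolding rr using set_param[OF assms(3)] by simp
  also have "\<dots> = (\<Sum>k<?K. E (of_int (c * int (a + ?M * k)) / 2^n))"
    by (subst sum.reindex) (auto simp: inj_on_def)
  also have "\<dots> = (\<Sum>k<?K. E (of_int (c * int a) / 2^n) * w ^ k)"
  proof (rule sum.cong[OF refl])
    fix k
    have eq: "of_int (c * int (a + ?M * k)) / (2::real)^n = of_int (c * int a) / 2^n + of_nat k * (of_int c * 2^e / 2^n)"
      by (simp add: field_simps)
    show "E (of_int (c * int (a + ?M * k)) / 2^n) = E (of_int (c * int a) / 2^n) * w ^ k"
      by (simp only: eq E_add E_nat_mult w_def)
  qed
  also have "\<dots> = E (of_int (c * int a) / 2^n) * (\<Sum>k<?K. w ^ k)"
    by (simp add: sum_distrib_left)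
  also have "\<dots> = (if n \<le> e then 2^(r-e) * E (of_int (c * int a) / 2^n) else 0)"
  proof (cases "n \<le> e")
    case True
    have "of_int c * 2^e / 2^n = (of_int (c * 2^(e-n)) :: real)"
      using pow_split[OF True] by simp
    hence "w = 1" unfolding w_def by (simp only: E_int)
    thus ?thesis using True by simp
  next
    case False
    have "w ^ (2^(n-e-1)) = E (of_nat (2^(n-e-1)) * (of_int c * 2^e / 2^n))"
      unfolding w_def by (rule E_nat_mult[symmetric])
    also have "of_nat (2^(n-e-1)) * (of_int c * 2^e / 2^n) = (of_int c / 2 :: real)"
    proof -
      define d where "d = n - e - 1"
      have nd: "n = Suc (e + d)" using False by (simp add: d_def)
      have "(2::real)^n = 2^e * 2^d * 2" unfolding nd by (simp add: power_add)
      hence "(2::real)^n = 2^e * 2^(n-e-1) * 2" by (simp add: d_def)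
      thus ?thesis by simp
    qed
    also have "E (of_int c / 2) = -1" by (rule E_half_odd[OF assms(4)])
    finally have "w \<noteq> 1" by auto
    moreover have "w ^ ?K = 1"
    proof -
      have "w ^ ?K = E (of_nat ?K * (of_int c * 2^e / 2^n))" unfolding w_def by (rule E_nat_mult[symmetric])
      also have "of_nat ?K * (of_int c * 2^e / 2^n) = (of_int (c * 2^(r-n)) :: real)"
      proof -
        have "(2::real)^(r-e) * 2^e = 2^n * 2^(r-n)" using assms(1,2)
          by (simp add: power_add[symmetric])
        thus ?thesis by (simp add: field_simps)
      qed
      finally show ?thesis by (simp only: E_int)
    qed
    ultimately show ?thesis using False by (simp add: sum_gp_strict)
  qed
  finally show ?thesis .
qed



lemma E_shift_int: "E (x + of_int k) = E x"
  by (simp add: E_add E_int)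

lemma E_shift_half: "odd c \<Longrightarrow> E (x + of_int c / 2) = - E x"
  by (simp add: E_add E_half_odd)

lemma E_quarter: "E (of_int c / 4) = \<i> powi c"
proof -
  have "\<i> powi c = cis (pi/2) powi c" by simp
  also have "\<dots> = cis (of_int c * (pi / 2))" by (rule cis_power_int)
  also have "\<dots> = E (of_int c / 4)" unfolding E_def by (simp add: field_simps)
  finally show ?thesis ..
qed

lemma E_eighth: "E (1/8) = complex_of_real (sqrt 2 / 2) * (1 + \<i>)"
  unfolding E_def
  by (simp add: complex_eq_iff cos_45 sin_45 field_simps)

lemma E_18_38: "E (1/8) + E (3/8) = \<i> * complex_of_real (sqrt 2)"
proof -
  have "E (3/8) = E (1/8) * E (1/4)" using E_add[of "1/8" "1/4"] by simp
  also have "E (1/4) = \<i>" using E_quarter[of 1] by simp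
  finally have "E (1/8) + E (3/8) = E (1/8) * (1 + \<i>)" by (simp add: algebra_simps)
  also have "\<dots> = complex_of_real (sqrt 2 / 2) * ((1 + \<i>) * (1 + \<i>))" by (simp add: E_eighth)
  also have "(1 + \<i>) * (1 + \<i>) = 2 * \<i>" by (simp add: algebra_simps)
  finally show ?thesis by simp
qed

lemma E_oct_sum:
  assumes "odd c"
  shows "E (of_int c / 8) + E (of_int (3 * c) / 8) =
    (if c mod 8 = 1 \<or> c mod 8 = 3 then \<i> * complex_of_real (sqrt 2) else - (\<i> * complex_of_real (sqrt 2)))"
proof -
  define q c' where "q = c div 8" and "c' = c mod 8"
  have c: "c = c' + 8 * q" unfolding q_def c'_def by simp
  have c'odd: "c' = 1 \<or> c' = 3 \<or> c' = 5 \<or> c' = 7" using assms unfolding c'_def by presburger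
  have e1: "E (of_int c / 8) = E (of_int c' / 8)"
    using E_shift_int[of "of_int c' / 8" q] by (simp add: c add_divide_distrib)
  have e3: "E (of_int (3 * c) / 8) = E (of_int (3 * c') / 8)"
    using E_shift_int[of "of_int (3 * c') / 8" "3 * q"] by (simp add: c add_divide_distrib algebra_simps)
  have h: "E (x + 1/2) = - E x" for x using E_shift_half[of 1 x] by simp
  have s: "E (1/8) + E (3/8) = \<i> * complex_of_real (sqrt 2)" by (rule E_18_38)
  have cm: "c mod 8 = c'" unfolding c'_def ..
  have lhs: "E (of_int c / 8) + E (of_int (3 * c) / 8) = E (of_int c' / 8) + E (of_int (3 * c') / 8)"
    using e1 e3 by simp
  have key: "E (of_int c' / 8) + E (of_int (3 * c') / 8) =
    (if c' = 1 \<or> c' = 3 then \<i> * complex_of_real (sqrt 2) else - (\<i> * complex_of_real (sqrt 2)))"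
    using c'odd
  proof (elim disjE)
    assume "c' = 1" thus ?thesis using s by simp
  next
    assume "c' = 3"
    have "E (9/8) = E (1/8)" using E_shift_int[of "1/8" 1] by simp
    thus ?thesis using s \<open>c' = 3\<close> by (simp add: add.commute)
  next
    assume "c' = 5"
    have "E (5/8) = - E (1/8)" using h[of "1/8"] by simp
    moreover have "E (15/8) = - E (3/8)" using h[of "3/8"] E_shift_int[of "7/8" 1] by simp
    ultimately show ?thesis using s \<open>c' = 5\<close> by (simp add: algebra_simps)
  next
    assume "c' = 7"
    have "E (7/8) = - E (3/8)" using h[of "3/8"] by simp
    moreover have "E (21/8) = - E (1/8)" using h[of "1/8"] E_shift_int[of "5/8" 2] by simp
    ultimately show ?thesis using s \<open>c' = 7\<close> by (simp add: algebra_simps)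
  qed
  show ?thesis using key lhs cm by simp
qed



lemma Ev0: "E (of_int (c * int a) / 2 ^ 0) = 1"
  using E_int[of "c * int a"] by simp
lemma Ev1: "odd c \<Longrightarrow> odd a \<Longrightarrow> E (of_int (c * int a) / 2 ^ 1) = -1"
  using E_half_odd[of "c * int a"] by simp
lemma Ev2_1: "E (of_int (c * int 1) / 2 ^ 2) = \<i> powi c"
  using E_quarter[of c] by simp
lemma Ev2_3: "odd c \<Longrightarrow> E (of_int (c * int 3) / 2 ^ 2) = - (\<i> powi c)"
proof -
  assume c: "odd c"
  have "of_int (c * int 3) / (2::real) ^ 2 = of_int c / 4 + of_int c / 2" by simp
  hence "E (of_int (c * int 3) / 2 ^ 2) = - E (of_int c / 4)" using E_shift_half[OF c] by metis
  thus ?thesis using E_quarter by simp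
qed
lemma Ev2_5: "E (of_int (c * int 5) / 2 ^ 2) = \<i> powi c"
proof -
  have "of_int (c * int 5) / (2::real) ^ 2 = of_int c / 4 + of_int c" by simp
  hence "E (of_int (c * int 5) / 2 ^ 2) = E (of_int c / 4)" using E_shift_int by metis
  thus ?thesis using E_quarter by simp
qed
lemma Ev2_7: "odd c \<Longrightarrow> E (of_int (c * int 7) / 2 ^ 2) = - (\<i> powi c)"
proof -
  assume c: "odd c"
  have "of_int (c * int 7) / (2::real) ^ 2 = (of_int c / 4 + of_int c / 2) + of_int c" by simp
  hence "E (of_int (c * int 7) / 2 ^ 2) = - E (of_int c / 4)" using E_shift_half[OF c] E_shift_int by metis
  thus ?thesis using E_quarter by simp
qed
lemma Ev3_5: "odd c \<Longrightarrow> E (of_int (c * int 5) / 2 ^ 3) = - E (of_int c / 8)"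
proof -
  assume c: "odd c"
  have "of_int (c * int 5) / (2::real) ^ 3 = of_int c / 8 + of_int c / 2" by simp
  thus ?thesis using E_shift_half[OF c] by metis
qed
lemma Ev3_7: "odd c \<Longrightarrow> E (of_int (c * int 7) / 2 ^ 3) = - E (of_int (3 * c) / 8)"
proof -
  assume c: "odd c"
  have "of_int (c * int 7) / (2::real) ^ 3 = of_int (3 * c) / 8 + of_int c / 2" by simp
  thus ?thesis using E_shift_half[OF c] by metis
qed
lemma Ev3_1: "E (of_int (c * int 1) / 2 ^ 3) = E (of_int c / 8)" by simp
lemma Ev3_3: "E (of_int (c * int 3) / 2 ^ 3) = E (of_int (3 * c) / 8)" by (simp add: mult.commute)



lemma fin_pow_card1:
  fixes x :: "'a::{finite,field}" assumes "x \<noteq> 0"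
  shows "x ^ (card (UNIV::'a set) - 1) = 1"
proof -
  let ?U = "UNIV - {0::'a}"
  have bij: "bij_betw (\<lambda>y. x * y) ?U ?U"
  proof (rule bij_betw_byWitness[where f'="\<lambda>y. inverse x * y"])
  qed (use assms in \<open>auto simp: field_simps\<close>)
  have "(\<Prod>y\<in>?U. x * y) = (\<Prod>y\<in>?U. y)"
    using prod.reindex_bij_betw[OF bij, of "\<lambda>y. y"] by simp
  moreover have "(\<Prod>y\<in>?U. x * y) = x ^ card ?U * (\<Prod>y\<in>?U. y)"
    by (simp add: prod.distrib)
  moreover have "(\<Prod>y\<in>?U. y) \<noteq> 0" by simp
  moreover have "card ?U = card (UNIV::'a set) - 1" by (simp add: card_Diff_singleton)
  ultimately show ?thesis by simp
qed

lemma fin_pow_card: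
  fixes x :: "'a::{finite,field}"
  shows "x ^ card (UNIV::'a set) = x"
proof (cases "x = 0")
  case True thus ?thesis by (simp add: card_gt_0_iff)
next
  case False
  have "card (UNIV::'a set) > 0" by (simp add: card_gt_0_iff)
  hence "card (UNIV::'a set) = Suc (card (UNIV::'a set) - 1)" by simp
  then have "x ^ card (UNIV::'a set) = x * x ^ (card (UNIV::'a set) - 1)" by (metis power_Suc)
  thus ?thesis using fin_pow_card1[OF False] by simp
qed


locale LS =
  fixes chi :: "'a::{finite,field} \<Rightarrow> complex" and p s m :: nat
  assumes mc: "mult_char chi" and ord: "char_order chi = 2 ^ m"
    and card: "card (UNIV::'a set) = p ^ s" and p1: "p > 1" and s1: "s \<ge> 1" and m1: "m \<ge> 1"
begin

lemma chi0: "chi 0 = 0" using mc by (simp add: mult_char_def)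
lemma chinz: "x \<noteq> 0 \<Longrightarrow> chi x \<noteq> 0" using mc by (simp add: mult_char_def)
lemma chimult: "x \<noteq> 0 \<Longrightarrow> y \<noteq> 0 \<Longrightarrow> chi (x * y) = chi x * chi y"
  using mc by (simp add: mult_char_def)

lemma chi1: "chi 1 = 1"
proof -
  have "chi 1 = chi 1 * chi 1" using chimult[of 1 1] by simp
  thus ?thesis using chinz[of 1] by (metis mult_cancel_left1 one_neq_zero)
qed

lemma chipow: "k > 0 \<Longrightarrow> chi (x ^ k) = chi x ^ k"
proof (induction k)
  case 0 thus ?case by simp
next
  case (Suc k)
  show ?case
  proof (cases "k = 0")
    case True thus ?thesis by simp
  next
    case False
    show ?thesis
    proof (cases "x = 0")
      case True thus ?thesis by (simp add: chi0)
    next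
      case x: False
      have "chi (x ^ Suc k) = chi (x * x ^ k)" by simp
      also have "\<dots> = chi x * chi (x ^ k)" using x by (simp add: chimult)
      also have "\<dots> = chi x ^ Suc k" using Suc False by simp
      finally show ?thesis .
    qed
  qed
qed

lemma card_ge2: "card (UNIV::'a set) \<ge> 2"
proof -
  have "{0::'a, 1} \<subseteq> UNIV" by simp
  hence "card {0::'a,1} \<le> card (UNIV::'a set)" by (rule card_mono[OF finite_UNIV])
  thus ?thesis by simp
qed

lemma chi_unit: assumes "x \<noteq> 0" shows "chi x ^ (2 ^ m) = 1"
proof -
  let ?P = "\<lambda>n. n > 0 \<and> (\<forall>x. x \<noteq> 0 \<longrightarrow> chi x ^ n = 1)"
  have "?P (card (UNIV::'a set) - 1)"
  proof (intro conjI allI impI)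
    show "card (UNIV::'a set) - 1 > 0" using card_ge2 by simp
    fix y :: 'a assume "y \<noteq> 0"
    have "chi y ^ (card (UNIV::'a set) - 1) = chi (y ^ (card (UNIV::'a set) - 1))"
      using card_ge2 by (simp add: chipow)
    also have "\<dots> = 1" using fin_pow_card1[OF \<open>y \<noteq> 0\<close>] chi1 by simp
    finally show "chi y ^ (card (UNIV::'a set) - 1) = 1" .
  qed
  hence "?P (LEAST n. ?P n)" by (rule LeastI)
  hence "?P (char_order chi)" by (simp add: char_order_def)
  thus ?thesis using ord assms by simp
qed

lemma chi_pow_mod: "x \<noteq> 0 \<Longrightarrow> chi x ^ a = chi x ^ (a mod 2 ^ m)"
proof -
  assume x: "x \<noteq> 0"
  have "chi x ^ a = chi x ^ (a mod 2^m + 2^m * (a div 2^m))" by simp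
  also have "\<dots> = chi x ^ (a mod 2^m) * (chi x ^ 2^m) ^ (a div 2^m)"
    by (metis power_add power_mult)
  also have "\<dots> = chi x ^ (a mod 2^m)" using chi_unit[OF x] by simp
  finally show ?thesis .
qed

lemma period:
  assumes "a > 0" "b > 0" "int a mod 2 ^ m = int b mod 2 ^ m"
  shows "char_pow chi a = char_pow chi b"
proof
  fix x
  have ab: "a mod 2^m = b mod 2^m" using assms(3)
    by (metis of_nat_eq_iff of_nat_numeral of_nat_power zmod_int)
  show "char_pow chi a x = char_pow chi b x"
  proof (cases "x = 0")
    case True thus ?thesis using assms by (simp add: char_pow_def chi0 zero_power)
  next
    case False thus ?thesis unfolding char_pow_def
      by (metis ab chi_pow_mod)
  qed
qed

lemma norm_chi: "x \<noteq> 0 \<Longrightarrow> norm (chi x) = 1"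
proof -
  assume "x \<noteq> 0"
  hence "norm (chi x) ^ (2^m) = 1" using chi_unit by (metis norm_one norm_power)
  thus ?thesis using power_eq_imp_eq_base[of "norm (chi x)" "2^m" 1] by simp
qed

lemma cnj_chi: assumes "x \<noteq> 0" shows "cnj (chi x) = chi x ^ (2^m - 1)"
proof -
  have "chi x * cnj (chi x) = 1"
    using norm_chi[OF assms] complex_norm_square[of "chi x"] by simp
  moreover have "chi x * chi x ^ (2^m - 1) = 1"
    using chi_unit[OF assms] by (metis One_nat_def Suc_pred pos2 power_Suc zero_less_power)
  ultimately show ?thesis using chinz[OF assms] by (metis mult_left_cancel)
qed

lemma conj_pow: assumes "n > 0"
  shows "char_pow (char_conj chi) n = char_pow chi ((2^m - 1) * n)"
proof
  fix x
  show "char_pow (char_conj chi) n x = char_pow chi ((2^m - 1) * n) x"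
  proof (cases "x = 0")
    case True
    have "(2::nat)^m > 1" using m1 one_less_power[of "2::nat" m] by simp
    hence "(2 ^ m - 1) * n > 0" using assms by simp
    thus ?thesis using True assms by (simp add: char_pow_def char_conj_def chi0 zero_power)
  next
    case False thus ?thesis
      by (simp add: char_pow_def char_conj_def cnj_chi power_mult)
  qed
qed


lemma frob_id: "(x::'a) ^ (p ^ s) = x"
  using fin_pow_card[of x] card by simp

lemma frob_inj: "inj (\<lambda>x::'a. x ^ p)"
proof (rule injI)
  fix x y :: 'a assume h: "x ^ p = y ^ p"
  have ps: "p ^ s = p * p ^ (s - 1)" using s1 by (metis Suc_diff_1 le_less_trans less_numeral_extra(1) power_Suc zero_less_one le_neq_implies_less less_one not_less)
  have "x = (x ^ p) ^ (p ^ (s - 1))" using frob_id[of x] ps by (metis power_mult)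
  also have "\<dots> = (y ^ p) ^ (p ^ (s - 1))" using h by simp
  also have "\<dots> = y" using frob_id[of y] ps by (metis power_mult)
  finally show "x = y" .
qed

lemma frob_surj: "surj (\<lambda>x::'a. x ^ p)"
  using frob_inj finite_UNIV_inj_surj[of "\<lambda>x::'a. x ^ p"] by simp

lemma trace_frob: "trace p s ((x::'a) ^ p) = trace p s x"
proof -
  let ?f = "\<lambda>i. x ^ (p ^ i)"
  have "trace p s (x ^ p) = (\<Sum>i<s. ?f (Suc i))"
    unfolding trace_def by (simp add: power_mult[symmetric] mult.commute)
  moreover have "(\<Sum>i<s. ?f (Suc i)) + ?f 0 = (\<Sum>i<s. ?f i) + ?f s"
    using sum.lessThan_Suc_shift[of ?f s] sum.lessThan_Suc[of ?f s] by simp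
  moreover have "?f s = ?f 0" using frob_id[of x] by simp
  ultimately show ?thesis unfolding trace_def by simp
qed

lemma gauss_frob: "gauss_sum p s (char_pow chi (n * p)) = gauss_sum p s (char_pow chi n)"
proof -
  define f where "f x = chi x ^ n * zeta_pow p (int (trace_index p s x))" for x
  have "gauss_sum p s (char_pow chi n) = sum f UNIV"
    by (simp add: gauss_sum_def f_def char_pow_def)
  also have "\<dots> = sum f ((\<lambda>x. x ^ p) ` UNIV)" using frob_surj by simp
  also have "\<dots> = sum (f \<circ> (\<lambda>x. x ^ p)) UNIV"
    by (rule sum.reindex) (use frob_inj in \<open>simp add: inj_on_def inj_def\<close>)
  also have "\<dots> = gauss_sum p s (char_pow chi (n * p))"
    unfolding gauss_sum_def char_pow_def f_def comp_def
  proof (rule sum.cong[OF refl])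
    fix x :: 'a
    have "trace_index p s (x ^ p) = trace_index p s x"
      unfolding trace_index_def trace_frob ..
    moreover have "chi (x ^ p) ^ n = chi x ^ (n * p)"
      using p1 by (simp add: chipow power_mult[symmetric] mult.commute)
    ultimately show "chi (x ^ p) ^ n * zeta_pow p (int (trace_index p s (x ^ p))) =
      chi x ^ (n * p) * zeta_pow p (int (trace_index p s x))" by simp
  qed
  finally show ?thesis ..
qed

lemma gauss_frob_iter: "gauss_sum p s (char_pow chi (n * p ^ k)) = gauss_sum p s (char_pow chi n)"
proof (induction k)
  case 0 thus ?case by simp
next
  case (Suc k)
  have "n * p ^ Suc k = (n * p ^ k) * p" by simp
  thus ?case using gauss_frob[of "n * p ^ k"] Suc by metis
qed


abbreviation "GA r \<equiv> gauss_sum p s (char_pow chi (2^(m-r)))"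
abbreviation "GB r \<equiv> gauss_sum p s (char_pow (char_conj chi) (2^(m-r)))"

lemma cls_A:
  assumes "r \<le> m" "j > 0" "(2::int)^r dvd int p ^ k - int j * int p ^ l"
  shows "gauss_sum p s (char_pow chi (2^(m-r) * j)) = GA r"
proof -
  have "gauss_sum p s (char_pow chi (2^(m-r) * j)) = gauss_sum p s (char_pow chi (2^(m-r) * j * p ^ l))"
    using gauss_frob_iter[of "2^(m-r) * j" l] by simp
  also have "char_pow chi (2^(m-r) * j * p ^ l) = char_pow chi (2^(m-r) * p ^ k)"
  proof (rule period)
    show "0 < 2 ^ (m - r) * j * p ^ l" "0 < 2 ^ (m - r) * p ^ k" using assms p1 by auto
    have e: "(2::int)^m = 2^(m-r) * 2^r" using assms(1) by (simp add: power_add[symmetric])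
    have "(2::int)^m dvd 2^(m-r) * (int p ^ k - int j * int p ^ l)"
      unfolding e using assms(3) by (rule mult_dvd_mono[OF dvd_refl])
    moreover have "int (2 ^ (m - r) * j * p ^ l) - int (2 ^ (m - r) * p ^ k) =
       - (2^(m-r) * (int p ^ k - int j * int p ^ l))" by (simp add: algebra_simps)
    ultimately have "(2::int)^m dvd int (2 ^ (m - r) * j * p ^ l) - int (2 ^ (m - r) * p ^ k)"
      by (metis dvd_minus_iff)
    thus "int (2 ^ (m - r) * j * p ^ l) mod 2 ^ m = int (2 ^ (m - r) * p ^ k) mod 2 ^ m"
      by (simp add: mod_eq_dvd_iff)
  qed
  also have "gauss_sum p s (char_pow chi (2^(m-r) * p ^ k)) = GA r"
    by (rule gauss_frob_iter)
  finally show ?thesis .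
qed

lemma int_2m1: "int (2^m - 1) = 2^m - 1"
  by (simp add: of_nat_diff)

lemma cls_B:
  assumes "r \<le> m" "j > 0" "(2::int)^r dvd int p ^ k + int j * int p ^ l"
  shows "gauss_sum p s (char_pow chi (2^(m-r) * j)) = GB r"
proof -
  have m2: "(2::nat)^m - 1 > 0" using m1 one_less_power[of "2::nat" m] by simp
  have "gauss_sum p s (char_pow chi (2^(m-r) * j)) = gauss_sum p s (char_pow chi (2^(m-r) * j * p ^ l))"
    using gauss_frob_iter[of "2^(m-r) * j" l] by simp
  also have "char_pow chi (2^(m-r) * j * p ^ l) = char_pow chi ((2^m - 1) * 2^(m-r) * p ^ k)"
  proof (rule period)
    show "0 < 2 ^ (m - r) * j * p ^ l" "0 < (2^m - 1) * 2 ^ (m - r) * p ^ k" using assms p1 m2 by auto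
    have e: "(2::int)^m = 2^(m-r) * 2^r" using assms(1) by (simp add: power_add[symmetric])
    have "(2::int)^m dvd 2^(m-r) * (int p ^ k + int j * int p ^ l)"
      unfolding e using assms(3) by (rule mult_dvd_mono[OF dvd_refl])
    moreover have "(2::int)^m dvd 2^m * (2^(m-r) * int p ^ k)" by simp
    ultimately have "(2::int)^m dvd 2^(m-r) * (int p ^ k + int j * int p ^ l) - 2^m * (2^(m-r) * int p ^ k)"
      by (rule dvd_diff)
    moreover have "int (2 ^ (m - r) * j * p ^ l) - int ((2^m - 1) * 2 ^ (m - r) * p ^ k) =
       2^(m-r) * (int p ^ k + int j * int p ^ l) - 2^m * (2^(m-r) * int p ^ k)"
      unfolding of_nat_mult int_2m1 by (simp add: algebra_simps)
    ultimately have "(2::int)^m dvd int (2 ^ (m - r) * j * p ^ l) - int ((2^m - 1) * 2 ^ (m - r) * p ^ k)"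
      by simp
    thus "int (2 ^ (m - r) * j * p ^ l) mod 2 ^ m = int ((2^m - 1) * 2 ^ (m - r) * p ^ k) mod 2 ^ m"
      by (simp add: mod_eq_dvd_iff del: of_nat_diff)
  qed
  also have "gauss_sum p s (char_pow chi ((2^m - 1) * 2^(m-r) * p ^ k)) =
      gauss_sum p s (char_pow chi ((2^m - 1) * 2^(m-r)))"
    by (rule gauss_frob_iter)
  also have "char_pow chi ((2^m - 1) * 2^(m-r)) = char_pow (char_conj chi) (2^(m-r))"
    by (rule conj_pow[symmetric]) simp
  finally show ?thesis .
qed


lemma psi_quad: "char_pow chi (2^(m-1)) = quad_char"
proof -
  define \<psi> where "\<psi> x = chi x ^ 2^(m-1)" for x
  have mm: "(2::nat)^m = 2^(m-1) * 2" using m1 by (metis Suc_diff_1 less_le_trans less_one not_le power_Suc2 zero_less_one le_neq_implies_less)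
  have psq: "\<psi> x ^ 2 = 1" if "x \<noteq> 0" for x
    using chi_unit[OF that] unfolding \<psi>_def by (simp add: power_mult[symmetric] mm)
  have pm: "\<psi> x = 1 \<or> \<psi> x = -1" if "x \<noteq> 0" for x
    using psq[OF that] by (simp add: power2_eq_1_iff)
  have pmult: "\<psi> (x * y) = \<psi> x * \<psi> y" if "x \<noteq> 0" "y \<noteq> 0" for x y
    unfolding \<psi>_def using chimult[OF that] by (simp add: power_mult_distrib)
  obtain a where a: "a \<noteq> 0" "\<psi> a \<noteq> 1"
  proof (rule ccontr)
    assume "\<not> thesis"
    hence all: "\<forall>x. x \<noteq> 0 \<longrightarrow> \<psi> x = 1" using that by blast
    have "char_order chi \<le> 2^(m-1)" unfolding char_order_def
      by (rule Least_le) (use all in \<open>simp add: \<psi>_def\<close>)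
    moreover have "(2::nat)^(m-1) < 2^m" using m1 by simp
    ultimately show False using ord by linarith
  qed
  define S where "S = {x::'a. x \<noteq> 0 \<and> (\<exists>y. y * y = x)}"
  define K where "K = {x::'a. x \<noteq> 0 \<and> \<psi> x = 1}"
  define L where "L = {x::'a. x \<noteq> 0 \<and> \<psi> x \<noteq> 1}"
  have SK: "S \<subseteq> K"
  proof
    fix x assume "x \<in> S"
    then obtain y where y: "y * y = x" "x \<noteq> 0" unfolding S_def by auto
    hence "y \<noteq> 0" by auto
    hence "\<psi> x = \<psi> y ^ 2" using y pmult[of y y] by (simp add: power2_eq_square)
    thus "x \<in> K" using psq[OF \<open>y \<noteq> 0\<close>] y unfolding K_def by simp
  qed
  have KL: "card K \<le> card L"
  proof (rule card_inj_on_le[where f="\<lambda>x. a * x"])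
    show "inj_on (\<lambda>x. a * x) K" using a by (auto simp: inj_on_def)
    show "(\<lambda>x. a * x) ` K \<subseteq> L" using a pmult unfolding K_def L_def by auto
  qed simp
  have KLc: "card K + card L = card (UNIV::'a set) - 1"
  proof -
    have "K \<union> L = UNIV - {0}" "K \<inter> L = {}" unfolding K_def L_def by auto
    hence "card K + card L = card (UNIV - {0::'a})"
      by (metis card_Un_disjoint finite)
    thus ?thesis by (simp add: card_Diff_singleton)
  qed
  have S2: "card (UNIV::'a set) - 1 \<le> 2 * card S"
  proof -
    define R where "R = (\<lambda>s. SOME y::'a. y * y = s) ` S"
    have "UNIV - {0} \<subseteq> R \<union> uminus ` R"
    proof
      fix y :: 'a assume "y \<in> UNIV - {0}"
      hence yS: "y * y \<in> S" unfolding S_def by auto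
      define z where "z = (SOME z::'a. z * z = y * y)"
      have "z * z = y * y" unfolding z_def by (rule someI[of _ y]) simp
      hence "(z - y) * (z + y) = 0" by (simp add: algebra_simps)
      hence "z - y = 0 \<or> z + y = 0" by simp
      hence "y = z \<or> y = - z" by (metis add.commute eq_neg_iff_add_eq_0 right_minus_eq)
      moreover have "z \<in> R" unfolding R_def z_def using yS by blast
      ultimately show "y \<in> R \<union> uminus ` R" by blast
    qed
    hence "card (UNIV - {0::'a}) \<le> card (R \<union> uminus ` R)" by (rule card_mono[OF finite])
    also have "\<dots> \<le> card R + card (uminus ` R)" by (rule card_Un_le)
    also have "\<dots> \<le> card S + card S"
    proof -
      have "card R \<le> card S" unfolding R_def by (rule card_image_le) simp
      moreover have "card (uminus ` R) \<le> card R" by (rule card_image_le) simp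
      ultimately show ?thesis by linarith
    qed
    finally show ?thesis by (simp add: card_Diff_singleton)
  qed
  have "card S \<le> card K" by (rule card_mono[OF finite SK])
  hence "card S = card K" using KL KLc S2 by linarith
  hence SKeq: "S = K" using SK by (metis card_subset_eq finite)
  show ?thesis
  proof
    fix x :: 'a
    show "char_pow chi (2^(m-1)) x = quad_char x"
    proof (cases "x = 0")
      case True thus ?thesis by (simp add: char_pow_def quad_char_def chi0)
    next
      case False
      show ?thesis
      proof (cases "\<exists>y. y * y = x")
        case True
        hence "x \<in> K" using SK False unfolding S_def by auto
        thus ?thesis using True False unfolding K_def \<psi>_def char_pow_def quad_char_def by simp
      next
        case nsq: False
        hence "x \<notin> K" using SKeq unfolding S_def by auto
        hence "\<psi> x = -1" using pm[OF False] False unfolding K_def by auto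
        thus ?thesis using nsq False unfolding \<psi>_def char_pow_def quad_char_def by simp
      qed
    qed
  qed
qed

end


context LS begin

definition JJ :: "nat \<Rightarrow> nat set" where "JJ r = {j. 1 \<le> j \<and> j \<le> 2^r - 1 \<and> odd j}"

definition FF :: "nat \<Rightarrow> nat \<Rightarrow> int \<Rightarrow> nat \<Rightarrow> complex" where
  "FF r t c j = gauss_sum p s (char_pow chi (2^(m-r) * j)) * E (of_int (c * int j) / 2^(r-t))"

lemma split4: "JJ r = {j. j < 2^r \<and> j mod 2^2 = 1} \<union> {j. j < 2^r \<and> j mod 2^2 = 3}"
proof -
  have "(0::nat) < 2^r" by simp
  thus ?thesis unfolding JJ_def by (auto; presburger)
qed

lemma main5:
  assumes p5: "p mod 8 = 5" and r3: "3 \<le> r" and rm: "r \<le> m" and tm: "t \<le> m" and c: "odd c"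
  shows "(\<Sum>j\<in>JJ r. FF r t c j) =
    (if r \<le> t then 2^(r-2) * (GA r + GB r)
     else if r = t + 1 then - (2^(r-2) * (GA r + GB r))
     else if r = t + 2 then 2^(r-2) * \<i> powi c * (GA r - GB r) else 0)"
proof -
  define n where "n = r - t"
  define A1 where "A1 = {j::nat. j < 2^r \<and> j mod 2^2 = 1}"
  define A3 where "A3 = {j::nat. j < 2^r \<and> j mod 2^2 = 3}"
  define F where "F j = E (of_int (c * int j) / 2^n)" for j
  obtain k0 where k0: "p = 8 * k0 + 5" using p5 by (metis mod_div_mult_eq add.commute mult.commute)
  have pu: "int p = 1 + 2^2 * (2 * int k0 + 1)" using k0 by simp
  have odu: "odd (2 * int k0 + 1)" by simp
  have gA: "gauss_sum p s (char_pow chi (2^(m-r) * j)) = GA r" if "j \<in> A1" for j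
  proof -
    have "j mod 4 = 1" using that unfolding A1_def by simp
    hence "int (j mod 4) = 1" by simp
    hence "int j mod 2^2 = 1" by (simp add: zmod_int)
    then obtain k where "(2::int)^r dvd int p ^ k - int j"
      using gen_res[OF pu odu _ _ , of r "int j"] r3 by auto
    moreover have "j > 0" using that unfolding A1_def by (auto intro!: Nat.gr0I)
    ultimately show ?thesis using cls_A[OF rm, of j k 0] by simp
  qed
  have gB: "gauss_sum p s (char_pow chi (2^(m-r) * j)) = GB r" if "j \<in> A3" for j
  proof -
    have "j mod 4 = 3" using that unfolding A3_def by simp
    hence "int (j mod 4) = 3" by simp
    hence "int j mod 2^2 = 3" by (simp add: zmod_int)
    hence "(- int j) mod 2^2 = 1" by (simp add: zmod_zminus1_eq_if)
    then obtain k where "(2::int)^r dvd int p ^ k - (- int j)"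
      using gen_res[OF pu odu _ _ , of r "- int j"] r3 by auto
    moreover have "j > 0" using that unfolding A3_def by (auto intro!: Nat.gr0I)
    ultimately show ?thesis using cls_B[OF rm, of j k 0] by simp
  qed
  have disj: "A1 \<inter> A3 = {}" unfolding A1_def A3_def by auto
  have "(\<Sum>j\<in>JJ r. FF r t c j) = (\<Sum>j\<in>A1. FF r t c j) + (\<Sum>j\<in>A3. FF r t c j)"
    unfolding split4 A1_def[symmetric] A3_def[symmetric]
    by (rule sum.union_disjoint) (auto simp: A1_def A3_def disj)
  also have "(\<Sum>j\<in>A1. FF r t c j) = GA r * (\<Sum>j\<in>A1. F j)"
    by (simp add: sum_distrib_left FF_def F_def n_def gA)
  also have "(\<Sum>j\<in>A3. FF r t c j) = GB r * (\<Sum>j\<in>A3. F j)"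
    by (simp add: sum_distrib_left FF_def F_def n_def gB)
  also have "(\<Sum>j\<in>A1. F j) = (if n \<le> 2 then 2^(r-2) * E (of_int (c * int 1) / 2^n) else 0)"
    unfolding A1_def F_def by (rule sumres) (use r3 c in \<open>auto simp: n_def\<close>)
  also have "(\<Sum>j\<in>A3. F j) = (if n \<le> 2 then 2^(r-2) * E (of_int (c * int 3) / 2^n) else 0)"
    unfolding A3_def F_def by (rule sumres) (use r3 c in \<open>auto simp: n_def\<close>)
  finally have main: "(\<Sum>j\<in>JJ r. FF r t c j) =
     GA r * (if n \<le> 2 then 2^(r-2) * E (of_int (c * int 1) / 2^n) else 0) +
     GB r * (if n \<le> 2 then 2^(r-2) * E (of_int (c * int 3) / 2^n) else 0)" .
  consider "n = 0" | "n = 1" | "n = 2" | "n \<ge> 3" by linarith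
  thus ?thesis
  proof cases
    case 1
    hence "r \<le> t" unfolding n_def by simp
    thus ?thesis unfolding main using 1 Ev0[of c 1] Ev0[of c 3] by (simp add: algebra_simps)
  next
    case 2
    hence "r = t + 1" unfolding n_def by simp
    thus ?thesis unfolding main using 2 Ev1[OF c, of 1] Ev1[OF c, of 3] by (simp add: algebra_simps)
  next
    case 3
    hence "r = t + 2" unfolding n_def by simp
    thus ?thesis unfolding main using 3 Ev2_1[of c] Ev2_3[OF c] by (simp add: algebra_simps)
  next
    case 4
    hence "\<not> r \<le> t" "r \<noteq> t + 1" "r \<noteq> t + 2" unfolding n_def by auto
    thus ?thesis unfolding main using 4 by simp
  qed
qed


lemma split8: "JJ r = ({j. j < 2^r \<and> j mod 2^3 = 1} \<union> {j. j < 2^r \<and> j mod 2^3 = 3}) \<union>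
   ({j. j < 2^r \<and> j mod 2^3 = 5} \<union> {j. j < 2^r \<and> j mod 2^3 = 7})"
proof -
  have "(0::nat) < 2^r" by simp
  thus ?thesis unfolding JJ_def by (auto; presburger)
qed

lemma nat_mod_int: "(j::nat) mod 8 = a \<Longrightarrow> int j mod 8 = int a"
  by (metis of_nat_numeral zmod_int)

lemma main3:
  assumes p3: "p mod 8 = 3" and r3: "3 \<le> r" and rm: "r \<le> m" and tm: "t \<le> m" and c: "odd c"
  shows "(\<Sum>j\<in>JJ r. FF r t c j) =
    (if r \<le> t then 2^(r-2) * (GA r + GB r)
     else if r = t + 1 then - (2^(r-2) * (GA r + GB r))
     else if r = t + 3 \<and> (c mod 8 = 1 \<or> c mod 8 = 3)
       then 2^(r-3) * \<i> * complex_of_real (sqrt 2) * (GA r - GB r)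
     else if r = t + 3 \<and> (c mod 8 = 5 \<or> c mod 8 = 7)
       then - (2^(r-3) * \<i> * complex_of_real (sqrt 2) * (GA r - GB r))
     else 0)"
proof -
  define n where "n = r - t"
  define B where "B a = {j::nat. j < 2^r \<and> j mod 2^3 = a}" for a
  define F where "F j = E (of_int (c * int j) / 2^n)" for j
  obtain k0 where k0: "p = 8 * k0 + 3" using p3 by (metis mod_div_mult_eq add.commute mult.commute)
  have pu: "int p ^ 2 = 1 + 2^3 * (8 * int k0 ^ 2 + 6 * int k0 + 1)" using k0 by (simp add: power2_eq_square algebra_simps)
  have odu: "odd (8 * int k0 ^ 2 + 6 * int k0 + 1)" by simp
  have pm8: "int p mod 8 = 3" using nat_mod_int[OF p3] by simp
  have gen: "\<exists>k. (2::int)^r dvd int p ^ (2 * k) - x" if hx: "x mod 2^3 = 1" for x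
  proof -
    obtain k where "(2::int)^r dvd (int p ^ 2) ^ k - x" using gen_res[OF pu odu _ _ hx] r3 by auto
    thus ?thesis by (metis power_mult)
  qed
  have jpos: "j > 0" if "j \<in> B a" "odd a" for j a
    using that unfolding B_def by (auto intro!: Nat.gr0I)
  have g1: "gauss_sum p s (char_pow chi (2^(m-r) * j)) = GA r" if "j \<in> B 1" for j
  proof -
    have "int j mod 8 = 1" using that nat_mod_int unfolding B_def by simp
    then obtain k where "(2::int)^r dvd int p ^ (2 * k) - int j" using gen by auto
    thus ?thesis using cls_A[OF rm jpos[OF that], of "2 * k" 0] by simp
  qed
  have g3: "gauss_sum p s (char_pow chi (2^(m-r) * j)) = GA r" if "j \<in> B 3" for j
  proof -
    have "int j mod 8 = 3" using that nat_mod_int unfolding B_def by simp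
    hence "(int j * int p) mod 8 = 1" using pm8 mod_mult_eq[of "int j" 8 "int p"] by simp
    then obtain k where "(2::int)^r dvd int p ^ (2 * k) - int j * int p" using gen by auto
    thus ?thesis using cls_A[OF rm jpos[OF that], of "2 * k" 1] by simp
  qed
  have g7: "gauss_sum p s (char_pow chi (2^(m-r) * j)) = GB r" if "j \<in> B 7" for j
  proof -
    have "int j mod 8 = 7" using that nat_mod_int unfolding B_def by simp
    hence "(- int j) mod 8 = 1" by (simp add: zmod_zminus1_eq_if)
    then obtain k where "(2::int)^r dvd int p ^ (2 * k) + int j" using gen[of "- int j"] by auto
    thus ?thesis using cls_B[OF rm jpos[OF that], of "2 * k" 0] by simp
  qed
  have g5: "gauss_sum p s (char_pow chi (2^(m-r) * j)) = GB r" if "j \<in> B 5" for j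
  proof -
    have "int j mod 8 = 5" using that nat_mod_int unfolding B_def by simp
    hence "(int j * int p) mod 8 = 7" using pm8 mod_mult_eq[of "int j" 8 "int p"] by simp
    hence "(- (int j * int p)) mod 8 = 1" by (simp add: zmod_zminus1_eq_if)
    then obtain k where "(2::int)^r dvd int p ^ (2 * k) + int j * int p" using gen[of "- (int j * int p)"] by auto
    thus ?thesis using cls_B[OF rm jpos[OF that], of "2 * k" 1] by simp
  qed
  have Sv: "(\<Sum>j\<in>B a. F j) = (if n \<le> 3 then 2^(r-3) * E (of_int (c * int a) / 2^n) else 0)"
    if "a < 8" for a
    unfolding B_def F_def by (rule sumres) (use r3 c that in \<open>auto simp: n_def\<close>)
  have fin: "finite (B a)" for a unfolding B_def by simp
  have "(\<Sum>j\<in>JJ r. FF r t c j) = (\<Sum>j\<in>B 1 \<union> B 3. FF r t c j) + (\<Sum>j\<in>B 5 \<union> B 7. FF r t c j)"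
    unfolding split8 B_def[symmetric]
    by (rule sum.union_disjoint) (auto simp: B_def)
  also have "(\<Sum>j\<in>B 1 \<union> B 3. FF r t c j) = (\<Sum>j\<in>B 1. FF r t c j) + (\<Sum>j\<in>B 3. FF r t c j)"
    by (rule sum.union_disjoint) (auto simp: B_def)
  also have "(\<Sum>j\<in>B 5 \<union> B 7. FF r t c j) = (\<Sum>j\<in>B 5. FF r t c j) + (\<Sum>j\<in>B 7. FF r t c j)"
    by (rule sum.union_disjoint) (auto simp: B_def)
  also have "(\<Sum>j\<in>B 1. FF r t c j) = GA r * (\<Sum>j\<in>B 1. F j)"
    by (simp add: sum_distrib_left FF_def F_def n_def g1)
  also have "(\<Sum>j\<in>B 3. FF r t c j) = GA r * (\<Sum>j\<in>B 3. F j)"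
    by (simp add: sum_distrib_left FF_def F_def n_def g3)
  also have "(\<Sum>j\<in>B 5. FF r t c j) = GB r * (\<Sum>j\<in>B 5. F j)"
    by (simp add: sum_distrib_left FF_def F_def n_def g5)
  also have "(\<Sum>j\<in>B 7. FF r t c j) = GB r * (\<Sum>j\<in>B 7. F j)"
    by (simp add: sum_distrib_left FF_def F_def n_def g7)
  finally have main: "(\<Sum>j\<in>JJ r. FF r t c j) =
     GA r * (if n \<le> 3 then 2^(r-3) * E (of_int (c * int 1) / 2^n) else 0) +
     GA r * (if n \<le> 3 then 2^(r-3) * E (of_int (c * int 3) / 2^n) else 0) +
     (GB r * (if n \<le> 3 then 2^(r-3) * E (of_int (c * int 5) / 2^n) else 0) +
     GB r * (if n \<le> 3 then 2^(r-3) * E (of_int (c * int 7) / 2^n) else 0))"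
    using Sv[of 1] Sv[of 3] Sv[of 5] Sv[of 7] by simp
  have r2: "(2::complex)^(r-2) = 2^(r-3) * 2"
  proof -
    have "r - 2 = Suc (r - 3)" using r3 by simp
    thus ?thesis by (simp add: power_Suc2)
  qed
  consider "n = 0" | "n = 1" | "n = 2" | "n = 3" | "n \<ge> 4" by linarith
  thus ?thesis
  proof cases
    case 1
    hence "r \<le> t" unfolding n_def by simp
    thus ?thesis unfolding main using 1 Ev0[of c 1] Ev0[of c 3] Ev0[of c 5] Ev0[of c 7] r2
      by (simp add: algebra_simps)
  next
    case 2
    hence "r = t + 1" unfolding n_def by simp
    thus ?thesis unfolding main using 2 Ev1[OF c, of 1] Ev1[OF c, of 3] Ev1[OF c, of 5] Ev1[OF c, of 7] r2
      by (simp add: algebra_simps)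
  next
    case 3
    hence "r = t + 2" unfolding n_def by simp
    thus ?thesis unfolding main using 3 Ev2_1[of c] Ev2_3[OF c] Ev2_5[of c] Ev2_7[OF c]
      by (simp add: algebra_simps)
  next
    case 4
    hence rt: "r = t + 3" unfolding n_def by simp
    have o: "E (of_int c / 8) + E (of_int (3 * c) / 8) =
      (if c mod 8 = 1 \<or> c mod 8 = 3 then \<i> * complex_of_real (sqrt 2) else - (\<i> * complex_of_real (sqrt 2)))"
      by (rule E_oct_sum[OF c])
    have c8: "c mod 8 = 1 \<or> c mod 8 = 3 \<or> c mod 8 = 5 \<or> c mod 8 = 7" using c by presburger
    have "(\<Sum>j\<in>JJ r. FF r t c j) = 2^(r-3) * (E (of_int c / 8) + E (of_int (3 * c) / 8)) * (GA r - GB r)"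
      unfolding main using 4 Ev3_1[of c] Ev3_3[of c] Ev3_5[OF c] Ev3_7[OF c]
      by (simp add: algebra_simps)
    thus ?thesis unfolding o using rt c8 by (auto simp: algebra_simps)
  next
    case 5
    hence "\<not> r \<le> t" "r \<noteq> t + 1" "r \<noteq> t + 3" unfolding n_def by auto
    thus ?thesis unfolding main using 5 by simp
  qed
qed


lemma case_r1:
  assumes "odd c"
  shows "(\<Sum>j\<in>JJ 1. FF 1 t c j) = (if t = 0 then - gauss_sum p s (quad_char :: 'a \<Rightarrow> complex) else gauss_sum p s (quad_char :: 'a \<Rightarrow> complex))"
proof -
  have J: "JJ 1 = {1}" unfolding JJ_def by auto
  have g: "gauss_sum p s (char_pow chi (2^(m-1) * 1)) = gauss_sum p s (quad_char :: 'a \<Rightarrow> complex)" using psi_quad by simp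
  show ?thesis
  proof (cases "t = 0")
    case True thus ?thesis unfolding J FF_def using g Ev1[OF assms, of 1] by simp
  next
    case False hence "1 - t = 0" by simp
    thus ?thesis unfolding J FF_def using g Ev0[of c 1] False by simp
  qed
qed

lemma case_r2:
  assumes "odd c" "2 \<le> m"
  shows "(\<Sum>j\<in>JJ 2. FF 2 t c j) =
    (if t \<ge> 2 then GA 2 + GB 2 else if t = 1 then - (GA 2 + GB 2) else \<i> powi c * (GA 2 - GB 2))"
proof -
  have J: "JJ 2 = {1, 3}" unfolding JJ_def by (auto; presburger)
  have g3: "gauss_sum p s (char_pow chi (2^(m-2) * 3)) = GB 2"
    using cls_B[OF assms(2), of 3 0 0] by simp
  have S: "(\<Sum>j\<in>JJ 2. FF 2 t c j) = GA 2 * E (of_int (c * int 1) / 2^(2-t)) + GB 2 * E (of_int (c * int 3) / 2^(2-t))"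
    unfolding J FF_def using g3 by simp
  consider "t \<ge> 2" | "t = 1" | "t = 0" by linarith
  thus ?thesis
  proof cases
    case 1 hence "2 - t = 0" by simp
    thus ?thesis unfolding S using 1 Ev0[of c 1] Ev0[of c 3] by simp
  next
    case 2 thus ?thesis unfolding S using Ev1[OF assms(1), of 1] Ev1[OF assms(1), of 3] by simp
  next
    case 3 thus ?thesis unfolding S using Ev2_1[of c] Ev2_3[OF assms(1)] by (simp add: algebra_simps)
  qed
qed

end

theorem lemma14:
  fixes \<chi> :: "'a::{finite,field} \<Rightarrow> complex"
    and p s m r t :: nat and c0 :: int
  assumes "prime p" and "p mod 8 = 3 \<or> p mod 8 = 5"
    and "s \<ge> 1" and "card (UNIV :: 'a set) = p ^ s"
    and "2 ^ m dvd (card (UNIV :: 'a set) - 1)"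
    and "p mod 8 = 3 \<Longrightarrow> m \<ge> 3" and "p mod 8 = 5 \<Longrightarrow> m \<ge> 2"
    and "mult_char \<chi>" and "char_order \<chi> = 2 ^ m"
    and "1 \<le> r" and "r \<le> m" and "t \<le> m" and "odd c0"
  shows "W p s \<chi> m r t c0 =
    (let G = gauss_sum p s;
         A = G (char_pow \<chi> (2^(m-r))); B = G (char_pow (char_conj \<chi>) (2^(m-r)))
     in if r = 1 then (if t = 0 then - G quad_char else G quad_char)
     else if r = 2 then
       (if t \<ge> 2 then A + B else if t = 1 then - (A + B) else \<i> powi c0 * (A - B))
     else
       (if r \<le> t then 2^(r-2) * (A + B)
        else if r = t + 1 then - (2^(r-2) * (A + B))
        else if r = t + 2 \<and> p mod 8 = 5 then 2^(r-2) * \<i> powi c0 * (A - B)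
        else if r = t + 3 \<and> p mod 8 = 3 \<and> (c0 mod 8 = 1 \<or> c0 mod 8 = 3)
          then 2^(r-3) * \<i> * complex_of_real (sqrt 2) * (A - B)
        else if r = t + 3 \<and> p mod 8 = 3 \<and> (c0 mod 8 = 5 \<or> c0 mod 8 = 7)
          then - (2^(r-3) * \<i> * complex_of_real (sqrt 2) * (A - B))
        else 0))"
proof -
  have m2: "m \<ge> 2" using assms(2,6,7) by auto
  interpret L: LS \<chi> p s m
    using assms prime_gt_1_nat m2 by unfold_locales auto
  have Wsum: "W p s \<chi> m r t c0 = (\<Sum>j\<in>L.JJ r. L.FF r t c0 j)"
    unfolding W_def L.JJ_def L.FF_def
    by (rule sum.cong[OF refl]) (simp add: zeta_conv assms(11,12))
  consider "r = 1" | "r = 2" | "r \<ge> 3" using assms(10) by linarith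
  thus ?thesis
  proof cases
    case 1 thus ?thesis unfolding Wsum using L.case_r1[OF assms(13), of t] by (simp add: Let_def)
  next
    case 2 thus ?thesis unfolding Wsum using L.case_r2[OF assms(13) m2, of t] by (simp add: Let_def)
  next
    case 3
    from assms(2) show ?thesis
    proof
      assume p3: "p mod 8 = 3"
      have c8: "c0 mod 8 = 1 \<or> c0 mod 8 = 3 \<or> c0 mod 8 = 5 \<or> c0 mod 8 = 7" using assms(13) by presburger
      show ?thesis unfolding Wsum using L.main3[OF p3 3 assms(11,12,13)] 3 p3 c8 by (auto simp add: Let_def)
    next
      assume p5: "p mod 8 = 5"
      show ?thesis unfolding Wsum using L.main5[OF p5 3 assms(11,12,13)] 3 p5 by (simp add: Let_def)
    qed
  qed
qed


end
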